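(* Let $K$ be a good triangulation of $P^n$ and $\sigma\in K$ a simplex with $\sigma\cap\mathbf H^n\neq\emptyset$. If $\sigma\cap\mathbf H_h=\emptyset$, then there is a unique $H_{i,\alpha}$ ($1\le i\le n$, $\alpha\in\{0,\infty\}$) such that $\sigma\cap\mathbf H^n\subset H_{i,\alpha}$, and moreover $\sigma\cap H'=\emptyset$ for every cubical face $H'$ other than $H_{i,\alpha}$.
   Context: $P^n=(\mathbb P^1_{\mathbb C})^n$ with coordinates $z_i$; $H_{i,\alpha}=\{z_i=\alpha\}$, $\alpha\in\{0,\infty\}$; a cubical face is a nonempty intersection of one or more of the $H_{i,\alpha}$; $\mathbf H^n=\bigcup H_{i,\alpha}$; $\mathbf H_h=\bigcup_{i<i',\alpha,\beta}(H_{i,\alpha}\cap H_{i',\beta})$; $\mathbf D^n=\bigcup_i\{z_i=1\}$. A good triangulation is a finite simplicial complex $K$ with a semi-algebraic homeomorphism $|K|\cong P^n$ (identifying them) such that $\mathbf D^n$ is a subcomplex, the image of each open simplex is a regular submanifold, every finite union of cubical faces is a full subcomplex (any simplex of $K$ whose vertices all lie in it belongs to it), and each $\{|z_i|\le1\}$ is a subcomplex. *)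

theory Defs
  imports "HOL-Analysis.Analysis"
begin

inductive poly_fun :: "('a::euclidean_space \<Rightarrow> real) \<Rightarrow> bool" where
  pf_const: "poly_fun (\<lambda>x. c)"
| pf_coord: "b \<in> Basis \<Longrightarrow> poly_fun (\<lambda>x. x \<bullet> b)"
| pf_add: "poly_fun p \<Longrightarrow> poly_fun q \<Longrightarrow> poly_fun (\<lambda>x. p x + q x)"
| pf_mult: "poly_fun p \<Longrightarrow> poly_fun q \<Longrightarrow> poly_fun (\<lambda>x. p x * q x)"

inductive semialg :: "'a::euclidean_space set \<Rightarrow> bool" where
  sa_eq: "poly_fun p \<Longrightarrow> semialg {x. p x = 0}"
| sa_pos: "poly_fun p \<Longrightarrow> semialg {x. 0 < p x}"
| sa_un: "semialg S \<Longrightarrow> semialg T \<Longrightarrow> semialg (S \<union> T)"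
| sa_compl: "semialg S \<Longrightarrow> semialg (- S)"

definition Cinf_on :: "'a::euclidean_space set \<Rightarrow> ('a \<Rightarrow> 'b::euclidean_space) \<Rightarrow> bool" where
  "Cinf_on U f \<longleftrightarrow> (\<exists>F. f \<in> F \<and> (\<forall>g\<in>F. continuous_on U g \<and>
      (\<forall>b\<in>Basis. \<exists>g'\<in>F. \<forall>x\<in>U. ((\<lambda>t. g (x + t *\<^sub>R b)) has_vector_derivative g' x) (at 0))))"

definition regular_submanifold :: "'a::euclidean_space set \<Rightarrow> bool" where
  "regular_submanifold M \<longleftrightarrow> (\<forall>x\<in>M. \<exists>U V (\<phi>::'a \<Rightarrow> 'a) \<psi> L.
      open U \<and> x \<in> U \<and> open V \<and> subspace L \<and> Cinf_on U \<phi> \<and> Cinf_on V \<psi> \<and>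
      \<phi> ` U = V \<and> \<psi> ` V = U \<and> (\<forall>y\<in>U. \<psi> (\<phi> y) = y) \<and> (\<forall>v\<in>V. \<phi> (\<psi> v) = v) \<and>
      \<phi> ` (U \<inter> M) = V \<inter> L)"

section \<open>The Riemann sphere P^1 as the unit sphere in R^3, and P^n\<close>

definition north :: "real^3" where "north = vector [0, 0, 1]"

definition stereo :: "complex \<Rightarrow> real^3" where
  "stereo z = (1 / ((cmod z)\<^sup>2 + 1)) *\<^sub>R vector [2 * Re z, 2 * Im z, (cmod z)\<^sup>2 - 1]"

definition P1 :: "(real^3) set" where "P1 = insert north (range stereo)"

definition Pn :: "(real^3^'n) set" where "Pn = {z. \<forall>i. z $ i \<in> P1}"

datatype zinf = Z0 | ZInf

definition zpt :: "zinf \<Rightarrow> real^3" where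
  "zpt a = (case a of Z0 \<Rightarrow> stereo 0 | ZInf \<Rightarrow> north)"

definition Hface :: "'n \<Rightarrow> zinf \<Rightarrow> (real^3^'n) set" where
  "Hface i a = {z \<in> Pn. z $ i = zpt a}"

definition Hn :: "(real^3^'n) set" where "Hn = (\<Union>i a. Hface i a)"

definition Hh :: "(real^3^'n) set" where
  "Hh = \<Union>{Hface i a \<inter> Hface j b | i j a b. i \<noteq> j}"

definition Dn :: "(real^3^'n) set" where "Dn = (\<Union>i. {z \<in> Pn. z $ i = stereo 1})"

definition disc_i :: "'n \<Rightarrow> (real^3^'n) set" where
  "disc_i i = {z \<in> Pn. z $ i \<in> stereo ` cball 0 1}"

definition cubical_face :: "(real^3^'n) set \<Rightarrow> bool" where
  "cubical_face F \<longleftrightarrow> F \<noteq> {} \<and>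
     (\<exists>S. S \<noteq> {} \<and> F = \<Inter> ((\<lambda>(i, a). Hface i a) ` S))"

definition simplicial_complex :: "'a::euclidean_space set set \<Rightarrow> bool" where
  "simplicial_complex K \<longleftrightarrow> finite K \<and>
     (\<forall>s\<in>K. s \<noteq> {} \<and> finite s \<and> \<not> affine_dependent s) \<and>
     (\<forall>s\<in>K. \<forall>t. t \<subseteq> s \<and> t \<noteq> {} \<longrightarrow> t \<in> K) \<and>
     (\<forall>s\<in>K. \<forall>t\<in>K. convex hull s \<inter> convex hull t = convex hull (s \<inter> t))"

definition polyhedron_of :: "'a::euclidean_space set set \<Rightarrow> 'a set" where
  "polyhedron_of K = (\<Union>s\<in>K. convex hull s)"

definition is_subcomplex :: "'a::euclidean_space set set \<Rightarrow> ('a \<Rightarrow> 'b) \<Rightarrow> 'b set \<Rightarrow> bool" where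
  "is_subcomplex K h A \<longleftrightarrow> (\<exists>L\<subseteq>K. A = h ` (\<Union>s\<in>L. convex hull s))"

definition is_full_subcomplex :: "'a::euclidean_space set set \<Rightarrow> ('a \<Rightarrow> 'b) \<Rightarrow> 'b set \<Rightarrow> bool" where
  "is_full_subcomplex K h A \<longleftrightarrow> is_subcomplex K h A \<and>
     (\<forall>s\<in>K. h ` s \<subseteq> A \<longrightarrow> h ` (convex hull s) \<subseteq> A)"

definition good_triangulation ::
    "'a::euclidean_space set set \<Rightarrow> ('a \<Rightarrow> real^3^'n) \<Rightarrow> bool" where
  "good_triangulation K h \<longleftrightarrow> simplicial_complex K \<and>
     (\<exists>g. homeomorphism (polyhedron_of K) Pn h g) \<and>
     semialg {(x, h x) | x. x \<in> polyhedron_of K} \<and>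
     is_subcomplex K h Dn \<and>
     (\<forall>s\<in>K. regular_submanifold (h ` rel_interior (convex hull s))) \<and>
     (\<forall>F. finite F \<and> (\<forall>C\<in>F. cubical_face C) \<longrightarrow> is_full_subcomplex K h (\<Union>F)) \<and>
     (\<forall>i. is_subcomplex K h (disc_i i))"

end

theory Submission
  imports Defs
begin

lemma zpt_inj: "zpt a = zpt b \<Longrightarrow> a = b"
proof -
  have "stereo 0 \<noteq> north"
  proof
    assume "stereo 0 = north"
    hence "(stereo 0) $ 3 = north $ 3" by simp
    thus False by (simp add: stereo_def north_def)
  qed
  thus "zpt a = zpt b \<Longrightarrow> a = b"
    by (cases a; cases b) (auto simp: zpt_def)
qed

lemma two_faces:
  assumes "z \<in> Hface i a" "z \<in> Hface j b" "z \<notin> Hh"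
  shows "i = j \<and> a = b"
proof -
  have "i = j"
  proof (rule ccontr)
    assume "i \<noteq> j"
    hence "z \<in> Hh" using assms(1,2) unfolding Hh_def by blast
    thus False using assms(3) by blast
  qed
  moreover have "zpt a = zpt b" using assms(1,2) \<open>i = j\<close> by (simp add: Hface_def)
  ultimately show ?thesis using zpt_inj by blast
qed

lemma zpt_P1: "zpt a \<in> P1"
  by (cases a) (auto simp: zpt_def P1_def)

lemma Hface_cubical: "cubical_face (Hface i a)"
proof -
  have "(\<chi> k. zpt a) \<in> Hface i a"
    by (simp add: Hface_def Pn_def zpt_P1)
  moreover have "Hface i a = \<Inter> ((\<lambda>(i, a). Hface i a) ` {(i,a)})" by simp
  ultimately show ?thesis unfolding cubical_face_def by blast
qed

theorem lemma4p8:
  fixes K :: "'a::euclidean_space set set" and h :: "'a \<Rightarrow> real^3^'n" and s :: "'a set"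
  assumes "good_triangulation K h"
    and "s \<in> K"
    and "h ` (convex hull s) \<inter> Hn \<noteq> {}"
    and "h ` (convex hull s) \<inter> Hh = {}"
  shows "\<exists>i a. h ` (convex hull s) \<inter> Hn \<subseteq> Hface i a
     \<and> (\<forall>j b. h ` (convex hull s) \<inter> Hn \<subseteq> Hface j b \<longrightarrow> j = i \<and> b = a)
     \<and> (\<forall>F. cubical_face F \<and> F \<noteq> Hface i a \<longrightarrow> h ` (convex hull s) \<inter> F = {})"
proof -
  define P where "P = polyhedron_of K"
  have SC: "simplicial_complex K" using assms(1) by (simp add: good_triangulation_def)
  obtain g where hom: "homeomorphism P Pn h g"
    using assms(1) by (auto simp: good_triangulation_def P_def)
  have hcont: "continuous_on P h" and himg: "h ` P = Pn" and hg: "\<And>x. x \<in> P \<Longrightarrow> g (h x) = x"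
    using hom by (auto simp: homeomorphism_def)
  have hinj: "\<And>x y. x \<in> P \<Longrightarrow> y \<in> P \<Longrightarrow> h x = h y \<Longrightarrow> x = y" using hg by metis
  have full: "\<And>F. finite F \<Longrightarrow> (\<forall>C\<in>F. cubical_face C) \<Longrightarrow> is_full_subcomplex K h (\<Union>F)"
    using assms(1) by (simp add: good_triangulation_def)
  have fullK: "\<And>F t. finite F \<Longrightarrow> (\<forall>C\<in>F. cubical_face C) \<Longrightarrow> t \<in> K \<Longrightarrow> h ` t \<subseteq> \<Union>F
      \<Longrightarrow> h ` (convex hull t) \<subseteq> \<Union>F"
    using full unfolding is_full_subcomplex_def by blast
  have sub: "\<And>t u. t \<in> K \<Longrightarrow> u \<subseteq> t \<Longrightarrow> u \<noteq> {} \<Longrightarrow> u \<in> K"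
    using SC unfolding simplicial_complex_def by blast
  have inter: "\<And>t u. t \<in> K \<Longrightarrow> u \<in> K \<Longrightarrow> convex hull t \<inter> convex hull u = convex hull (t \<inter> u)"
    using SC unfolding simplicial_complex_def by blast
  have hullP: "\<And>t. t \<in> K \<Longrightarrow> convex hull t \<subseteq> P" unfolding P_def polyhedron_of_def by blast
  have sP: "convex hull s \<subseteq> P" using hullP assms(2) .
  let ?\<sigma> = "h ` (convex hull s)"
  have \<sigma>Pn: "?\<sigma> \<subseteq> Pn" using sP himg by blast
  have noHh: "\<And>z. z \<in> ?\<sigma> \<Longrightarrow> z \<notin> Hh" using assms(4) by blast
  have HnU: "Hn = \<Union> {Hface i a | i a. True}" unfolding Hn_def by blast
  have finHF: "finite {Hface i a | (i::'n) a. True}"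
  proof -
    have "{Hface i a | (i::'n) a. True} = (\<lambda>(i,a). Hface i a) ` (UNIV :: ('n \<times> zinf) set)" by auto
    moreover have "finite (UNIV :: zinf set)"
    proof -
      have "(UNIV :: zinf set) = {Z0, ZInf}" using zinf.exhaust by blast
      thus ?thesis by (metis finite.emptyI finite_insert)
    qed
    ultimately show ?thesis by (simp add: finite_Prod_UNIV)
  qed
  have "is_full_subcomplex K h Hn"
    unfolding HnU by (rule full[OF finHF]) (auto simp: Hface_cubical)
  then obtain L where LK: "L \<subseteq> K" and HnL: "Hn = h ` (\<Union>t\<in>L. convex hull t)"
    unfolding is_full_subcomplex_def is_subcomplex_def by blast
  define V where "V = {u \<in> s. h u \<in> Hn}"
  have key: "\<And>z. z \<in> ?\<sigma> \<Longrightarrow> z \<in> Hn \<Longrightarrow> \<exists>x u. z = h x \<and> x \<in> convex hull u \<and> u \<subseteq> V \<and> u \<in> K"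
  proof -
    fix z assume z1: "z \<in> ?\<sigma>" and z2: "z \<in> Hn"
    obtain x where x: "x \<in> convex hull s" "z = h x" using z1 by blast
    obtain t y where t: "t \<in> L" "y \<in> convex hull t" "z = h y" using z2 HnL by blast
    have "t \<in> K" using t LK by blast
    have "x = y" using hinj[of x y] x t sP hullP[OF \<open>t \<in> K\<close>] by blast
    hence xin: "x \<in> convex hull (s \<inter> t)" using inter[OF assms(2) \<open>t \<in> K\<close>] x t by blast
    hence ne: "s \<inter> t \<noteq> {}" by auto
    have "s \<inter> t \<subseteq> V"
    proof
      fix u assume "u \<in> s \<inter> t"
      hence "h u \<in> Hn" using HnL t(1) hull_subset[of t convex] by blast
      thus "u \<in> V" using \<open>u \<in> s \<inter> t\<close> by (simp add: V_def)
    qed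
    moreover have "s \<inter> t \<in> K" using sub[OF assms(2) _ ne] by blast
    ultimately show "\<exists>x u. z = h x \<and> x \<in> convex hull u \<and> u \<subseteq> V \<and> u \<in> K"
      using xin x by blast
  qed
  obtain z0 where z0: "z0 \<in> ?\<sigma>" "z0 \<in> Hn" using assms(3) by blast
  obtain x0 u0 where "x0 \<in> convex hull u0" "u0 \<subseteq> V" "u0 \<in> K" using key[OF z0] by blast
  hence "u0 \<noteq> {}" by auto
  then obtain v where v: "v \<in> V" using \<open>u0 \<subseteq> V\<close> by blast
  then obtain i a where via: "h v \<in> Hface i a" unfolding V_def Hn_def by blast
  have vs: "v \<in> s" using v by (simp add: V_def)
  have allV: "\<And>u. u \<in> V \<Longrightarrow> h u \<in> Hface i a"
  proof -
    fix u assume uV: "u \<in> V"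
    then obtain j b where ujb: "h u \<in> Hface j b" unfolding V_def Hn_def by blast
    show "h u \<in> Hface i a"
    proof (cases "j = i \<and> b = a")
      case True thus ?thesis using ujb by simp
    next
      case False
      have us: "u \<in> s" using uV by (simp add: V_def)
      have vus: "{v, u} \<subseteq> s" using us vs by simp
      have eK: "{v, u} \<in> K" using sub[OF assms(2) vus] by simp
      have fin2: "finite {Hface i a, Hface j b}" by simp
      have cf2: "\<forall>C\<in>{Hface i a, Hface j b}. cubical_face C" by (simp add: Hface_cubical)
      have vu2: "h ` {v, u} \<subseteq> \<Union>{Hface i a, Hface j b}" using via ujb by blast
      have "h ` (convex hull {v,u}) \<subseteq> \<Union>{Hface i a, Hface j b}"
        using fullK[OF fin2 cf2 eK vu2] .
      hence C1: "h ` (convex hull {v,u}) \<subseteq> Hface i a \<union> Hface j b" by simp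
      have ehull: "convex hull {v,u} \<subseteq> convex hull s"
        by (rule hull_mono) (use us vs in blast)
      have cc: "continuous_on (convex hull {v,u}) h"
        using continuous_on_subset[OF hcont] ehull sP by blast
      have conn: "connected (h ` (convex hull {v,u}))"
        by (rule connected_continuous_image[OF cc]) (simp add: convex_connected)
      define A where "A = {z :: real^3^'n. z $ i = zpt a}"
      define B where "B = {z :: real^3^'n. z $ j = zpt b}"
      have cA: "closed A" unfolding A_def
        by (rule closed_Collect_eq) (auto intro: continuous_intros)
      have cB: "closed B" unfolding B_def
        by (rule closed_Collect_eq) (auto intro: continuous_intros)
      let ?C = "h ` (convex hull {v,u})"
      have CA: "?C \<subseteq> A \<union> B" using C1 unfolding A_def B_def Hface_def by blast
      have CAB: "A \<inter> B \<inter> ?C = {}"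
      proof (rule ccontr)
        assume "A \<inter> B \<inter> ?C \<noteq> {}"
        then obtain z where z: "z \<in> A" "z \<in> B" "z \<in> ?C" by blast
        have "z \<in> ?\<sigma>" using z(3) ehull by blast
        hence "z \<in> Pn" "z \<notin> Hh" using \<sigma>Pn noHh by auto
        hence "z \<in> Hface i a" "z \<in> Hface j b" using z unfolding A_def B_def Hface_def by auto
        thus False using two_faces \<open>z \<notin> Hh\<close> False by blast
      qed
      have vC: "v \<in> convex hull {v,u}" by (simp add: hull_inc)
      have uC: "u \<in> convex hull {v,u}" by (simp add: hull_inc)
      have "h v \<in> A" using via unfolding A_def Hface_def by simp
      hence nA: "A \<inter> ?C \<noteq> {}" using vC by blast
      have "h u \<in> B" using ujb unfolding B_def Hface_def by simp
      hence nB: "B \<inter> ?C \<noteq> {}" using uC by blast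
      have False using conn unfolding connected_closed
        using cA cB CA CAB nA nB by blast
      thus ?thesis ..
    qed
  qed
  have part1: "?\<sigma> \<inter> Hn \<subseteq> Hface i a"
  proof
    fix z assume "z \<in> ?\<sigma> \<inter> Hn"
    then obtain x u where xu: "z = h x" "x \<in> convex hull u" "u \<subseteq> V" "u \<in> K" using key by blast
    have "h ` (convex hull u) \<subseteq> \<Union>{Hface i a}"
      by (rule fullK) (use xu allV in \<open>auto simp: Hface_cubical\<close>)
    thus "z \<in> Hface i a" using xu by auto
  qed
  have z0a: "z0 \<in> Hface i a" using part1 z0 by blast
  have part2: "\<forall>j b. ?\<sigma> \<inter> Hn \<subseteq> Hface j b \<longrightarrow> j = i \<and> b = a"
  proof (intro allI impI)
    fix j b assume "?\<sigma> \<inter> Hn \<subseteq> Hface j b"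
    hence "z0 \<in> Hface j b" using z0 by blast
    thus "j = i \<and> b = a" using two_faces[OF z0a _ noHh[OF z0(1)]] by blast
  qed
  have part3: "\<forall>F. cubical_face F \<and> F \<noteq> Hface i a \<longrightarrow> ?\<sigma> \<inter> F = {}"
  proof (intro allI impI)
    fix F assume F: "cubical_face F \<and> F \<noteq> Hface i a"
    then obtain S where S: "S \<noteq> {}" "F = \<Inter> ((\<lambda>(i, a). Hface i a) ` S)"
      unfolding cubical_face_def by blast
    show "?\<sigma> \<inter> F = {}"
    proof (rule ccontr)
      assume "?\<sigma> \<inter> F \<noteq> {}"
      then obtain z where z: "z \<in> ?\<sigma>" "z \<in> F" by blast
      obtain p where p: "p \<in> S" using S by blast
      have zp: "z \<in> Hface (fst p) (snd p)" using z S p by (cases p) auto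
      hence "z \<in> Hn" unfolding Hn_def by blast
      hence za: "z \<in> Hface i a" using part1 z by blast
      have "\<forall>q\<in>S. q = (i,a)"
      proof
        fix q assume "q \<in> S"
        hence "z \<in> Hface (fst q) (snd q)" using z S by (cases q) auto
        thus "q = (i,a)" using two_faces[OF za _ noHh[OF z(1)]] by (cases q) auto
      qed
      hence "S = {(i,a)}" using S(1) by auto
      hence "F = Hface i a" using S by simp
      thus False using F by blast
    qed
  qed
  show ?thesis using part1 part2 part3 by blast
qed

end
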